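(* Let $d$ be a fixed nonzero complex constant, let $\{a_i\},\{b_i\},\{c_i\},\{d_i\}$ ($i\in\mathbb{Z}$) be complex sequences, and let $m,n\ge0$ be integers such that for $-n\le j\le m$ the quantities $(c_j-a_j)(1-\frac{a_jc_j}{d})$, $(d_j-a_j)(1-\frac{a_jd_j}{d})$, $(c_j-b_j)(1-\frac{b_jc_j}{d})$, $(d_j-b_j)(1-\frac{b_jd_j}{d})$ are nonzero. Then $$\sum_{k=-n}^{m}(b_k-a_k)\Big(1-\frac{a_kb_k}{d}\Big)(d_k-c_k)\Big(1-\frac{c_kd_k}{d}\Big)\frac{\prod_{j=1}^{k-1}(c_j-a_j)(1-\frac{a_jc_j}{d})}{\prod_{j=1}^{k}(d_j-a_j)(1-\frac{a_jd_j}{d})}\frac{\prod_{j=1}^{k-1}(d_j-b_j)(1-\frac{b_jd_j}{d})}{\prod_{j=1}^{k}(c_j-b_j)(1-\frac{b_jc_j}{d})}$$ $$=\frac{\prod_{j=1}^{m}(c_j-a_j)(1-\frac{a_jc_j}{d})}{\prod_{j=1}^{m}(d_j-a_j)(1-\frac{a_jd_j}{d})}\frac{\prod_{j=1}^{m}(d_j-b_j)(1-\frac{b_jd_j}{d})}{\prod_{j=1}^{m}(c_j-b_j)(1-\frac{b_jc_j}{d})}-\frac{\prod_{j=-n}^{0}(d_j-a_j)(1-\frac{a_jd_j}{d})}{\prod_{j=-n}^{0}(c_j-a_j)(1-\frac{a_jc_j}{d})}\frac{\prod_{j=-n}^{0}(c_j-b_j)(1-\frac{b_jc_j}{d})}{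\prod_{j=-n}^{0}(d_j-b_j)(1-\frac{b_jd_j}{d})}.$$
   Context: Products over integer ranges follow the convention: $\prod_{j=k}^{m}A_j=A_k\cdots A_m$ if $m\ge k$; $=1$ if $m=k-1$; $=(A_{m+1}\cdots A_{k-1})^{-1}$ if $m\le k-2$. The constant $d$ is a distinct object from the sequence $d_k$. *)

theory Defs
  imports Complex_Main
begin

text \<open>Generalized product over an integer range with the paper's convention:
  gprod A k m = A k * ... * A m if m \<ge> k; = 1 if m = k - 1;
  = inverse (A (m+1) * ... * A (k-1)) if m \<le> k - 2.\<close>
definition gprod :: "(int \<Rightarrow> complex) \<Rightarrow> int \<Rightarrow> int \<Rightarrow> complex" where
  "gprod A k m = (if m \<ge> k - 1 then (\<Prod>j\<in>{k..m}. A j)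
                  else inverse (\<Prod>j\<in>{m+1..k-1}. A j))"

end

theory Submission
  imports Defs
begin


lemma gstep: assumes "A k \<noteq> 0 \<or> k \<ge> 1" shows "gprod A 1 k = gprod A 1 (k-1) * A k"
proof (cases "k \<ge> 1")
  case True
  have "{1..k} = insert k {1..k-1}" using True by auto
  then show ?thesis using True by (simp add: gprod_def mult.commute)
next
  case False
  then have nz: "A k \<noteq> 0" using assms by auto
  have "{k..0} = insert k {k+1..0}" using False by auto
  then have "(\<Prod>j\<in>{k..0}. A j) = A k * (\<Prod>j\<in>{k+1..0}. A j)" by simp
  then show ?thesis using False nz
    by (cases "k = 0") (auto simp: gprod_def field_simps)
qed

lemma tele: "(l::int) \<le> u + 1 \<Longrightarrow> (\<Sum>k\<in>{l..u}. (f k - f (k-1)) :: complex) = f u - f (l-1)"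
proof -
  assume "l \<le> u + 1"
  then have "l - 1 \<le> u" by simp
  then show ?thesis
  proof (induction u rule: int_ge_induct)
    case base then show ?case by simp
  next
    case (step i)
    have "{l..i+1} = insert (i+1) {l..i}" using step by auto
    then show ?case using step by simp
  qed
qed

lemma key: "(d::complex) \<noteq> 0 \<Longrightarrow> (b - a) * (1 - a * b / d) * (e - c) * (1 - c * e / d) =
  (c - a) * (1 - a * c / d) * ((e - b) * (1 - b * e / d)) - (e - a) * (1 - a * e / d) * ((c - b) * (1 - b * c / d))"
  by (simp add: field_simps)

theorem corollary3p7:
  fixes d :: complex and a b c e :: "int \<Rightarrow> complex" and m n :: int
  assumes hd: "d \<noteq> 0" and hm: "m \<ge> 0" and hn: "n \<ge> 0"
    and nz: "\<And>j. -n \<le> j \<Longrightarrow> j \<le> m \<Longrightarrow>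
        (c j - a j) * (1 - a j * c j / d) \<noteq> 0 \<and>
        (e j - a j) * (1 - a j * e j / d) \<noteq> 0 \<and>
        (c j - b j) * (1 - b j * c j / d) \<noteq> 0 \<and>
        (e j - b j) * (1 - b j * e j / d) \<noteq> 0"
  shows "(\<Sum>k\<in>{-n..m}. (b k - a k) * (1 - a k * b k / d) * (e k - c k) * (1 - c k * e k / d)
            * (gprod (\<lambda>j. (c j - a j) * (1 - a j * c j / d)) 1 (k - 1)
               / gprod (\<lambda>j. (e j - a j) * (1 - a j * e j / d)) 1 k)
            * (gprod (\<lambda>j. (e j - b j) * (1 - b j * e j / d)) 1 (k - 1)
               / gprod (\<lambda>j. (c j - b j) * (1 - b j * c j / d)) 1 k))
       = (gprod (\<lambda>j. (c j - a j) * (1 - a j * c j / d)) 1 m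
            / gprod (\<lambda>j. (e j - a j) * (1 - a j * e j / d)) 1 m)
         * (gprod (\<lambda>j. (e j - b j) * (1 - b j * e j / d)) 1 m
            / gprod (\<lambda>j. (c j - b j) * (1 - b j * c j / d)) 1 m)
         - (gprod (\<lambda>j. (e j - a j) * (1 - a j * e j / d)) (-n) 0
            / gprod (\<lambda>j. (c j - a j) * (1 - a j * c j / d)) (-n) 0)
         * (gprod (\<lambda>j. (c j - b j) * (1 - b j * c j / d)) (-n) 0
            / gprod (\<lambda>j. (e j - b j) * (1 - b j * e j / d)) (-n) 0)"
  proof -
  define P where "P = (\<lambda>j. (c j - a j) * (1 - a j * c j / d))"
  define Q where "Q = (\<lambda>j. (e j - a j) * (1 - a j * e j / d))"
  define R where "R = (\<lambda>j. (e j - b j) * (1 - b j * e j / d))"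
  define S where "S = (\<lambda>j. (c j - b j) * (1 - b j * c j / d))"
  define F where "F = (\<lambda>k. gprod P 1 k / gprod Q 1 k * (gprod R 1 k / gprod S 1 k))"
  have nz': "P j \<noteq> 0" "Q j \<noteq> 0" "R j \<noteq> 0" "S j \<noteq> 0" if "-n \<le> j" "j \<le> m" for j
    using nz[OF that] unfolding P_def Q_def R_def S_def by auto
  have trm: "(b k - a k) * (1 - a k * b k / d) * (e k - c k) * (1 - c k * e k / d)
            * (gprod P 1 (k - 1) / gprod Q 1 k) * (gprod R 1 (k - 1) / gprod S 1 k) = F k - F (k-1)"
    if k: "k \<in> {-n..m}" for k
  proof -
    from k have k1: "-n \<le> k" "k \<le> m" by auto
    note z = nz'[OF k1]
    have gP: "gprod P 1 k = gprod P 1 (k-1) * P k" using z by (intro gstep) auto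
    have gQ: "gprod Q 1 k = gprod Q 1 (k-1) * Q k" using z by (intro gstep) auto
    have gR: "gprod R 1 k = gprod R 1 (k-1) * R k" using z by (intro gstep) auto
    have gS: "gprod S 1 k = gprod S 1 (k-1) * S k" using z by (intro gstep) auto
    have X: "(b k - a k) * (1 - a k * b k / d) * (e k - c k) * (1 - c k * e k / d) = P k * R k - Q k * S k"
      unfolding P_def Q_def R_def S_def using key[OF hd] by simp
    show ?thesis unfolding F_def gP gQ gR gS X using z
      by (cases "gprod Q 1 (k-1) = 0"; cases "gprod S 1 (k-1) = 0") (simp_all add: field_simps)
  qed
  have "(\<Sum>k\<in>{-n..m}. (b k - a k) * (1 - a k * b k / d) * (e k - c k) * (1 - c k * e k / d)
            * (gprod P 1 (k - 1) / gprod Q 1 k) * (gprod R 1 (k - 1) / gprod S 1 k))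
        = (\<Sum>k\<in>{-n..m}. F k - F (k-1))" using trm by (rule sum.cong[OF refl])
  also have "\<dots> = F m - F (-n-1)" using hm hn by (intro tele) auto
  also have "F (-n-1) = gprod Q (-n) 0 / gprod P (-n) 0 * (gprod S (-n) 0 / gprod R (-n) 0)"
    unfolding F_def using hn by (simp add: gprod_def divide_inverse inverse_mult_distrib mult_ac)
  finally show ?thesis unfolding P_def Q_def R_def S_def F_def by simp
qed

end
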